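(* Consider a single positioning infrastructure with $N_{\text{anc}}$ anchors providing ranging information, of which $N_{\text{adv}}$ are manipulated by an uncoordinated attacker, and let $N_{\text{min}}$ be the minimum number of anchors required for positioning. Suppose that $N_{\text{anc}}-N_{\text{adv}}\ge N_{\text{min}}$. Then uncoordinated spoofing can be detected, i.e., there is at least one benign subset position estimate, and it is almost surely inconsistent with the spoofed position estimates.
   Context: Idealized model of subset-based integrity monitoring: a platform at unknown true position $\mathbf{p}_{\text{usr}}(t)\in\mathbb{R}^3$ receives ranging measurements from anchors with known positions (e.g., GNSS satellites, for which $N_{\text{min}}=4$). For every subset of anchors of size at least $N_{\text{min}}$, a position estimate is computed by multilateration. Positioning noise and uncertainties are taken to be negligible (zero) while attacker-induced deviations are preserved, and the anchor geometry is good, so every subset consisting only of benign measurements of size at least $N_{\text{min}}$ yields exactly $\mathbf{p}_{\text{usr}}(t)$. "Uncoordinated spoofing" means the manipulated ranging values are chosen independently (potentially randomly), so estimates from subsets involving manipulated measurements are random positions. *)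

theory Defs
  imports "HOL-Probability.Probability"
begin

text \<open>A subset estimate is a random position
  (real^3 valued random variable on a probability space).\<close>

definition admissible_subset :: "'a set \<Rightarrow> nat \<Rightarrow> 'a set \<Rightarrow> bool" where
  "admissible_subset Anc Nmin S \<longleftrightarrow> S \<subseteq> Anc \<and> Nmin \<le> card S"

definition benign_subset :: "'a set \<Rightarrow> 'a set \<Rightarrow> nat \<Rightarrow> 'a set \<Rightarrow> bool" where
  "benign_subset Anc Adv Nmin S \<longleftrightarrow> admissible_subset Anc Nmin S \<and> S \<inter> Adv = {}"

definition spoofed_subset :: "'a set \<Rightarrow> 'a set \<Rightarrow> nat \<Rightarrow> 'a set \<Rightarrow> bool" where
  "spoofed_subset Anc Adv Nmin S \<longleftrightarrow> admissible_subset Anc Nmin S \<and> S \<inter> Adv \<noteq> {}"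

end

theory Submission
  imports Defs
begin

theorem proposition1:
  fixes M :: "'w measure"
    and Anc Adv :: "'a set"
    and Nmin :: nat
    and est :: "'a set \<Rightarrow> 'w \<Rightarrow> real ^ 3"
    and p_usr :: "real ^ 3"
  assumes "prob_space M"
    and "finite Anc"
    and "Adv \<subseteq> Anc"
    and "card Anc - card Adv \<ge> Nmin"
    \<comment> \<open>noise-free, good geometry: every benign subset yields the true position\<close>
    and "\<And>S w. benign_subset Anc Adv Nmin S \<Longrightarrow> w \<in> space M \<Longrightarrow> est S w = p_usr"
    \<comment> \<open>uncoordinated spoofing: spoofed subset estimates are random positions without atoms\<close>
    and "\<And>S. spoofed_subset Anc Adv Nmin S \<Longrightarrow> est S \<in> borel_measurable M"
    and "\<And>S p. spoofed_subset Anc Adv Nmin S \<Longrightarrow>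
           measure M {w \<in> space M. est S w = p} = 0"
  shows "\<exists>S. benign_subset Anc Adv Nmin S \<and>
           (AE w in M. \<forall>S'. spoofed_subset Anc Adv Nmin S' \<longrightarrow> est S' w \<noteq> est S w)"
proof -
  interpret P: prob_space M by fact
  define S where "S = Anc - Adv"
  have cS: "card S = card Anc - card Adv"
    unfolding S_def using assms(2,3) by (simp add: card_Diff_subset finite_subset)
  have bS: "benign_subset Anc Adv Nmin S"
    unfolding benign_subset_def admissible_subset_def S_def using cS assms(4) S_def by auto
  let ?F = "{S'. spoofed_subset Anc Adv Nmin S'}"
  have fin: "finite ?F"
    by (rule finite_subset[of _ "Pow Anc"]) (auto simp: spoofed_subset_def admissible_subset_def assms(2))
  have each: "AE w in M. est S' w \<noteq> p_usr" if sp: "S' \<in> ?F" for S'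
  proof (rule AE_I')
    have meas: "est S' \<in> borel_measurable M" using assms(6) sp by simp
    have "{w \<in> space M. est S' w = p_usr} = est S' -` {p_usr} \<inter> space M" by auto
    also have "\<dots> \<in> sets M" using measurable_sets[OF meas, of "{p_usr}"] by simp
    finally have ins: "{w \<in> space M. est S' w = p_usr} \<in> sets M" .
    moreover have "measure M {w \<in> space M. est S' w = p_usr} = 0" using assms(7) sp by simp
    ultimately show "{w \<in> space M. est S' w = p_usr} \<in> null_sets M"
      by (simp add: P.emeasure_eq_measure null_sets_def)
  qed auto
  have "AE w in M. \<forall>S'\<in>?F. est S' w \<noteq> p_usr"
    by (rule eventually_ball_finite[OF fin]) (use each in blast)
  then have "AE w in M. \<forall>S'. spoofed_subset Anc Adv Nmin S' \<longrightarrow> est S' w \<noteq> est S w"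
    using AE_space by eventually_elim (use assms(5)[OF bS] in auto)
  with bS show ?thesis by blast
qed

end
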